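(* Let $\mathcal{S}$ be a set and $T:\bigcup_{n\in\mathbb{N}}\mathcal{S}^n\to\mathbb{R}_{\ge0}$ satisfy $T(AB)\ge T(A)+T(B)$ for all $A,B$ (where $AB$ is concatenation) and $T(s)=0$ for every single element $s\in\mathcal{S}$. Let $\epsilon>0$, $t>0$ and $n\in\mathbb{N}$. Then for every $U\in\mathcal{S}^n$ with $T(U)\le t$, the number of blocks of the partition $P_{U;T,\epsilon}$ produced by the $(T,\epsilon)$ division scheme satisfies $$|P_{U;T,\epsilon}| \leq \log_2(4n)\Big(1+\frac{t}{\epsilon}\Big).$$
   Context: The $(T,\epsilon)$ division scheme applied to $U\in\mathcal{S}^n$: if $T(U)\le\epsilon$, stop and output $U$; otherwise split $U = U_1'U_2'$ into two contiguous parts with $|U_1'| = \lfloor |U|/2\rfloor$ and $|U_2'| = |U|-|U_1'|$. At each subsequent step, every current part $U_i'$ with $T(U_i')>\epsilon$ is split into two almost equal contiguous parts in the same way; repeat until every part has $T\le\epsilon$. The resulting partition of $[n]$ into contiguous blocks is $P_{U;T,\epsilon}$, and $|P_{U;T,\epsilon}|$ is its number of blocks. *)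

theory Defs
  imports Complex_Main
begin

text \<open>The result is the list of blocks (contiguous, in order) of the partition
  P_{U;T,eps}. The guard length U \<le> 1 is only needed for termination; under the
  hypotheses of the lemma (T of a singleton is 0, T nonnegative and superadditive, hence
  T of the empty list is 0) it never changes the outcome.\<close>

function division_blocks :: "('a list \<Rightarrow> real) \<Rightarrow> real \<Rightarrow> 'a list \<Rightarrow> 'a list list" where
  "division_blocks T eps U =
     (if T U \<le> eps \<or> length U \<le> 1 then [U]
      else division_blocks T eps (take (length U div 2) U)
           @ division_blocks T eps (drop (length U div 2) U))"
  by pat_completeness auto
termination
  by (relation "measure (\<lambda>(T, eps, U). length U)") auto

end

theory Submission
  imports Defs
begin

lemma log2_4: "log 2 (4::real) = 2"
  using log_pow_cancel[of "2::real" 2] by simp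

definition cc :: "nat \<Rightarrow> real" where
  "cc m = (if m \<le> 1 then 0 else log 2 (real m - 1) + 1)"

lemma cc_nonneg: "cc m \<ge> 0"
  unfolding cc_def by auto

lemma cc_step:
  assumes "m \<ge> 2" "k \<le> (m + 1) div 2"
  shows "cc k + 1 \<le> cc m"
proof (cases "k \<le> 1")
  case True
  then show ?thesis using assms by (simp add: cc_def)
next
  case False
  have k1: "real k - 1 \<ge> 1" using False by simp
  have km: "4 * (real k - 1) \<le> 2 * (real m - 1)"
  proof -
    have "2 * k \<le> m + 1" using assms(2) by linarith
    then have "2 * real k \<le> real m + 1" by linarith
    then show ?thesis by (simp add: algebra_simps)
  qed
  have "log 2 (4 * (real k - 1)) = log 2 4 + log 2 (real k - 1)"
    using k1 by (intro log_mult_pos) auto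
  then have "cc k + 1 = log 2 (4 * (real k - 1))"
    using False k1 log2_4 by (simp add: cc_def)
  also have "\<dots> \<le> log 2 (2 * (real m - 1))"
    using km k1 by simp
  also have "\<dots> = log 2 2 + log 2 (real m - 1)"
    using assms by (intro log_mult_pos) auto
  also have "\<dots> = cc m"
    using assms by (simp add: cc_def)
  finally show ?thesis .
qed

lemma main_bound:
  assumes nonneg: "\<And>A. T A \<ge> 0"
    and superadd: "\<And>A B. T (A @ B) \<ge> T A + T B"
    and eps_pos: "eps > 0"
  shows "real (length (division_blocks T eps U)) \<le> 1 + cc (length U) * T U / eps"
proof (induction "length U" arbitrary: U rule: less_induct)
  case less
  show ?case
  proof (cases "T U \<le> eps \<or> length U \<le> 1")
    case True
    then show ?thesis using cc_nonneg[of "length U"] nonneg[of U] eps_pos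
      by (simp add: division_blocks.simps[of T eps U])
  next
    case False
    define m where "m = length U"
    define A where "A = take (m div 2) U"
    define B where "B = drop (m div 2) U"
    have m2: "m \<ge> 2" using False m_def by simp
    have TU: "T U > eps" using False by simp
    have AB: "U = A @ B" unfolding A_def B_def by simp
    have lA: "length A \<le> (m + 1) div 2" unfolding A_def m_def by simp
    have lB: "length B \<le> (m + 1) div 2" unfolding B_def m_def by simp
    have lAm: "length A < m" unfolding A_def m_def using m2 m_def by simp
    have lBm: "length B < m" unfolding B_def m_def using m2 m_def by simp
    have IA: "real (length (division_blocks T eps A)) \<le> 1 + cc (length A) * T A / eps"
      using less lAm m_def by blast
    have IB: "real (length (division_blocks T eps B)) \<le> 1 + cc (length B) * T B / eps"
      using less lBm m_def by blast
    have split: "division_blocks T eps U = division_blocks T eps A @ division_blocks T eps B"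
      using False unfolding A_def B_def m_def by (simp add: division_blocks.simps[of T eps U])
    have cA: "cc (length A) \<le> cc m - 1" using cc_step[OF m2 lA] by simp
    have cB: "cc (length B) \<le> cc m - 1" using cc_step[OF m2 lB] by simp
    have cm1: "cc m - 1 \<ge> 0" using cc_step[OF m2, of 0] cc_nonneg[of 0] by simp
    have "cc (length A) * T A / eps \<le> (cc m - 1) * T A / eps"
      using cA nonneg[of A] eps_pos by (simp add: divide_right_mono mult_right_mono)
    moreover have "cc (length B) * T B / eps \<le> (cc m - 1) * T B / eps"
      using cB nonneg[of B] eps_pos by (simp add: divide_right_mono mult_right_mono)
    moreover have "(cc m - 1) * T A / eps + (cc m - 1) * T B / eps \<le> (cc m - 1) * T U / eps"
    proof -
      have "(cc m - 1) * (T A + T B) \<le> (cc m - 1) * T U"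
        using superadd[of A B] AB cm1 by (simp add: mult_left_mono)
      then show ?thesis using eps_pos by (simp add: divide_right_mono add_divide_distrib[symmetric] distrib_left)
    qed
    moreover have "1 \<le> T U / eps" using TU eps_pos by simp
    ultimately have "real (length (division_blocks T eps U)) \<le> 1 + cc m * T U / eps"
      using IA IB split by (simp add: algebra_simps diff_divide_distrib)
    then show ?thesis using m_def by simp
  qed
qed

theorem lemma5p18:
  fixes T :: "'a list \<Rightarrow> real" and eps t :: real and n :: nat and U :: "'a list"
  assumes nonneg: "\<And>A. T A \<ge> 0"
    and superadd: "\<And>A B. T (A @ B) \<ge> T A + T B"
    and single: "\<And>s. T [s] = 0"
    and eps_pos: "eps > 0" and t_pos: "t > 0"
    and n_pos: "n \<ge> 1"
    and len: "length U = n"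
    and TU: "T U \<le> t"
  shows "real (length (division_blocks T eps U)) \<le> log 2 (4 * real n) * (1 + t / eps)"
proof -
  have b: "real (length (division_blocks T eps U)) \<le> 1 + cc n * T U / eps"
    using main_bound[where T=T and eps=eps and U=U, OF nonneg superadd eps_pos] len by simp
  have L1: "log 2 (4 * real n) \<ge> 2 + log 2 (real n)"
    using n_pos log2_4 by (simp add: log_mult)
  have l0: "log 2 (real n) \<ge> 0" using n_pos by simp
  have cn: "cc n \<le> log 2 (real n) + 1"
    unfolding cc_def using n_pos by auto
  have "cc n * T U / eps \<le> log 2 (4 * real n) * (t / eps)"
  proof -
    have "cc n * T U \<le> log 2 (4 * real n) * t"
      using cn L1 l0 TU nonneg[of U] cc_nonneg[of n]
      by (intro mult_mono) auto
    then show ?thesis using eps_pos by (simp add: divide_right_mono)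
  qed
  then show ?thesis using b L1 l0 by (simp add: distrib_left)
qed

end
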